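(* Let $\mathcal{C}$ be an $(n,s)$-curve of genus $g$ and let $D$ be a reduced non-special positive divisor of degree $g$ on the affine part of $\mathcal{C}$. Let $I_D\subset\mathbb{C}[x,y]/(f)$ be the ideal of polynomial functions vanishing on $D$ (with multiplicities). Then the images of the $g$ basis monomials $\upsilon_{\mathfrak{w}_1},\dots,\upsilon_{\mathfrak{w}_g}$ form a basis of the vector space $\big(\mathbb{C}[x,y]/(f)\big)/I_D$; that is, every polynomial function on $\mathcal{C}$ is congruent modulo $I_D$ to a unique linear combination of $\upsilon_{\mathfrak{w}_1},\dots,\upsilon_{\mathfrak{w}_g}$.
   Context: An $(n,s)$-curve ($n,s\geqslant2$ coprime) is $f(x,y;\lambda)\equiv -y^n+x^s+\sum_{j=0}^{n-2}\sum_{i=0}^{s-2}\lambda_{ns-in-js}y^jx^i=0$, $\lambda_k\in\mathbb{C}$, $\lambda_k=0$ for $k\leqslant0$, assumed of genus $g=\tfrac12(n-1)(s-1)$, compactified by one point $\infty$. Weights: $\mathrm{wgt}\,x=n$, $\mathrm{wgt}\,y=s$; monomials $\mathfrak{m}_{in+js}=x^iy^j$ ($0\leqslant j<n$) indexed by weight. Gap sequence $\mathfrak{W}=\mathbb{N}_0\setminus\{an+bs\mid a,b\in\mathbb{N}_0\}=\{\mathfrak{w}_1<\dots<\mathfrak{w}_g\}$. Basis monomials: $\upsilon_{\mathfrak{w}_i}=\mathfrak{m}_{2g-1-\mathfrak{w}_i}$, $i=1,\dots,g$; the differentials $\mathrm{d}u_{\mathfrak{w}_i}=\upsilon_{\mathfrak{w}_i}\,\mathrm{d}x/\partial_yf$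 form a basis of holomorphic differentials. A positive divisor is reduced if it contains no full fibre $\{(a,b_1),\dots,(a,b_n)\}$ of $x$; a degree $g$ divisor is non-special if no nonzero holomorphic differential vanishes on it. *)

theory Defs
  imports "HOL-Computational_Algebra.Polynomial" "HOL-Library.Multiset"
begin

text \<open>Bivariate complex polynomials are represented as "complex poly poly":
  the outer variable is y, the coefficients are polynomials in x.\<close>

type_synonym bipoly = "complex poly poly"

definition Xp :: bipoly where "Xp = [:[:0, 1:]:]"
definition Yp :: bipoly where "Yp = [:0, 1:]"
definition cpp :: "complex \<Rightarrow> bipoly" where "cpp c = [:[:c:]:]"

definition eval2 :: "bipoly \<Rightarrow> complex \<Rightarrow> complex \<Rightarrow> complex" where
  "eval2 h a b = poly (map_poly (\<lambda>c. poly c a) h) b"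

definition dY :: "bipoly \<Rightarrow> bipoly" where "dY h = pderiv h"
definition dX :: "bipoly \<Rightarrow> bipoly" where "dX h = map_poly pderiv h"

definition ns_curve :: "nat \<Rightarrow> nat \<Rightarrow> (int \<Rightarrow> complex) \<Rightarrow> bipoly" where
  "ns_curve n s lam =
     - (Yp ^ n) + Xp ^ s
     + (\<Sum>j<n - 1. \<Sum>i<s - 1.
          cpp (lam (int (n * s) - int (i * n) - int (j * s))) * Yp ^ j * Xp ^ i)"

text \<open>The affine curve f = 0 is nonsingular (equivalent to genus (n-1)(s-1)/2).\<close>
definition nonsingular_affine :: "bipoly \<Rightarrow> bool" where
  "nonsingular_affine f \<longleftrightarrow>
     (\<forall>a b. eval2 f a b = 0 \<longrightarrow> eval2 (dX f) a b \<noteq> 0 \<or> eval2 (dY f) a b \<noteq> 0)"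

definition genus :: "nat \<Rightarrow> nat \<Rightarrow> nat" where
  "genus n s = ((n - 1) * (s - 1)) div 2"

text \<open>Gap sequence and its i-th element (1-indexed, increasing).\<close>
definition gaps :: "nat \<Rightarrow> nat \<Rightarrow> nat set" where
  "gaps n s = {w. \<not> (\<exists>a b. w = a * n + b * s)}"

definition gap :: "nat \<Rightarrow> nat \<Rightarrow> nat \<Rightarrow> nat" where
  "gap n s i = sorted_list_of_set (gaps n s) ! (i - 1)"

definition wmonom :: "nat \<Rightarrow> nat \<Rightarrow> nat \<Rightarrow> bipoly" where
  "wmonom n s k = (case (THE (i, j). j < n \<and> i * n + j * s = k) of
                     (i, j) \<Rightarrow> Xp ^ i * Yp ^ j)"

definition upsilon :: "nat \<Rightarrow> nat \<Rightarrow> nat \<Rightarrow> bipoly" where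
  "upsilon n s i = wmonom n s (2 * genus n s - 1 - gap n s i)"

text \<open>Translate: h(x + a, y + b).\<close>
definition shift2 :: "bipoly \<Rightarrow> complex \<Rightarrow> complex \<Rightarrow> bipoly" where
  "shift2 h a b = pcompose (map_poly (\<lambda>c. pcompose c [:a, 1:]) h) [:[:b:], 1:]"

text \<open>Membership in M_P^m, M_P the maximal ideal of the point P in C[x,y].\<close>
definition in_Mpow :: "complex \<times> complex \<Rightarrow> nat \<Rightarrow> bipoly \<Rightarrow> bool" where
  "in_Mpow P m h \<longleftrightarrow>
     (\<forall>i j. i + j < m \<longrightarrow> coeff (coeff (shift2 h (fst P) (snd P)) j) i = 0)"

text \<open>The polynomial function h vanishes to order at least m at the point P of
  the curve f = 0, i.e. h lies in the m-th power of the maximal ideal of the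
  local ring of the curve at P.\<close>
definition ord_ge :: "bipoly \<Rightarrow> complex \<times> complex \<Rightarrow> nat \<Rightarrow> bipoly \<Rightarrow> bool" where
  "ord_ge f P m h \<longleftrightarrow>
     (\<exists>u a b. eval2 u (fst P) (snd P) \<noteq> 0 \<and> u * h = a + b * f \<and> in_Mpow P m a)"

definition vanishes_on :: "bipoly \<Rightarrow> (complex \<times> complex) multiset \<Rightarrow> bipoly \<Rightarrow> bool" where
  "vanishes_on f D h \<longleftrightarrow> (\<forall>P. ord_ge f P (count D P) h)"

definition on_curve :: "bipoly \<Rightarrow> complex \<times> complex \<Rightarrow> bool" where
  "on_curve f P \<longleftrightarrow> eval2 f (fst P) (snd P) = 0"

text \<open>D is reduced: it does not contain the full fibre divisor of x - a for any a,
  i.e. there is no a with D \<ge> (x - a)_0.\<close>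
definition reduced :: "bipoly \<Rightarrow> (complex \<times> complex) multiset \<Rightarrow> bool" where
  "reduced f D \<longleftrightarrow>
     \<not> (\<exists>a. \<forall>P. on_curve f P \<and> fst P = a \<longrightarrow>
              \<not> ord_ge f P (count D P + 1) (Xp - cpp a))"

definition ups_comb :: "nat \<Rightarrow> nat \<Rightarrow> (nat \<Rightarrow> complex) \<Rightarrow> bipoly" where
  "ups_comb n s c = (\<Sum>i = 1..genus n s. cpp (c i) * upsilon n s i)"

text \<open>Non-special: no nonzero holomorphic differential
  sum c_i du_{w_i} = (sum c_i upsilon_{w_i}) dx / f_y vanishes on D.  Since dx/f_y
  has neither zeros nor poles on the affine part, this is the vanishing of
  sum c_i upsilon_{w_i} on D.\<close>
definition nonspecial :: "nat \<Rightarrow> nat \<Rightarrow> (int \<Rightarrow> complex) \<Rightarrow> (complex \<times> complex) multiset \<Rightarrow> bool" where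
  "nonspecial n s lam D \<longleftrightarrow>
     (\<forall>c. vanishes_on (ns_curve n s lam) D (ups_comb n s c) \<longrightarrow>
          (\<forall>i\<in>{1..genus n s}. c i = 0))"

end

theory Submission
  imports Defs "Jordan_Normal_Form.Determinant"
begin

lemma hom_sum_gen:
  fixes \<phi> :: "'a::comm_monoid_add \<Rightarrow> 'b::comm_monoid_add"
  assumes "\<And>x y. \<phi> (x+y) = \<phi> x + \<phi> y" "\<phi> 0 = 0"
  shows "\<phi> (sum g A) = (\<Sum>x\<in>A. \<phi> (g x))"
proof (cases "finite A")
  case True then show ?thesis by (induction A rule: finite_induct) (auto simp: assms)
qed (simp add: assms)

lemma map_poly_hom_mult:
  fixes \<phi> :: "'a::comm_semiring_0 \<Rightarrow> 'b::comm_semiring_0"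
  assumes a: "\<And>x y. \<phi> (x+y) = \<phi> x + \<phi> y" and m: "\<And>x y. \<phi> (x*y) = \<phi> x * \<phi> y" and z: "\<phi> 0 = 0"
  shows "map_poly \<phi> (p*q) = map_poly \<phi> p * map_poly \<phi> q"
  by (rule poly_eqI) (simp add: coeff_map_poly coeff_mult hom_sum_gen[OF a z] m z)

lemma map_poly_hom_add:
  fixes \<phi> :: "'a::comm_semiring_0 \<Rightarrow> 'b::comm_semiring_0"
  assumes a: "\<And>x y. \<phi> (x+y) = \<phi> x + \<phi> y" and z: "\<phi> 0 = 0"
  shows "map_poly \<phi> (p+q) = map_poly \<phi> p + map_poly \<phi> q"
  by (rule poly_eqI) (simp add: coeff_map_poly a z)

lemma map_poly_hom_diff:
  fixes \<phi> :: "'a::comm_ring \<Rightarrow> 'b::comm_ring"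
  assumes a: "\<And>x y. \<phi> (x-y) = \<phi> x - \<phi> y" and z: "\<phi> 0 = 0"
  shows "map_poly \<phi> (p-q) = map_poly \<phi> p - map_poly \<phi> q"
  by (rule poly_eqI) (simp add: coeff_map_poly a z)

lemma eval2_add[simp]: "eval2 (p+q) a b = eval2 p a b + eval2 q a b"
  unfolding eval2_def by (simp add: map_poly_hom_add poly_add)
lemma eval2_mult[simp]: "eval2 (p*q) a b = eval2 p a b * eval2 q a b"
  unfolding eval2_def by (simp add: map_poly_hom_mult poly_add poly_mult)
lemma eval2_diff[simp]: "eval2 (p-q) a b = eval2 p a b - eval2 q a b"
  unfolding eval2_def by (simp add: map_poly_hom_diff poly_diff)
lemma eval2_cpp[simp]: "eval2 (cpp c) a b = c"
  unfolding eval2_def cpp_def by (simp add: map_poly_pCons)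
lemma eval2_Xp[simp]: "eval2 Xp a b = a"
  unfolding eval2_def Xp_def by (simp add: map_poly_pCons)
lemma eval2_Yp[simp]: "eval2 Yp a b = b"
  unfolding eval2_def Yp_def by (simp add: map_poly_pCons)
lemma eval2_0[simp]: "eval2 0 a b = 0"
  unfolding eval2_def by simp

lemma cpp_add: "cpp (x+y) = cpp x + cpp y" by (simp add: cpp_def)
lemma cpp_mult: "cpp (x*y) = cpp x * cpp y" by (simp add: cpp_def)
lemma cpp_diff: "cpp (x-y) = cpp x - cpp y" by (simp add: cpp_def)
lemma cpp_0[simp]: "cpp 0 = 0" by (simp add: cpp_def)
lemma cpp_1[simp]: "cpp 1 = 1" by (simp add: cpp_def one_pCons)


lemma pcomp_hom_add: "pcompose (x+y) q = pcompose x q + pcompose y q" by (rule pcompose_add)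

lemma shift2_add[simp]: "shift2 (p+q) a b = shift2 p a b + shift2 q a b"
  unfolding shift2_def by (simp add: map_poly_hom_add pcompose_add)
lemma shift2_diff[simp]: "shift2 (p-q) a b = shift2 p a b - shift2 q a b"
  unfolding shift2_def by (simp add: map_poly_hom_diff pcompose_diff)
lemma shift2_mult[simp]: "shift2 (p*q) a b = shift2 p a b * shift2 q a b"
  unfolding shift2_def by (simp add: map_poly_hom_mult pcompose_add pcompose_mult pcompose_0)
lemma shift2_cpp[simp]: "shift2 (cpp c) a b = cpp c"
  unfolding shift2_def cpp_def by (simp add: map_poly_pCons pcompose_pCons)
lemma shift2_Xp: "shift2 Xp a b = Xp + cpp a"
  unfolding shift2_def cpp_def Xp_def by (simp add: map_poly_pCons pcompose_pCons)
lemma shift2_Yp: "shift2 Yp a b = Yp + cpp b"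
  unfolding shift2_def cpp_def Yp_def by (simp add: map_poly_pCons pcompose_pCons pcompose_1)

definition Xa :: "complex \<Rightarrow> bipoly" where "Xa a = Xp - cpp a"
definition Yb :: "complex \<Rightarrow> bipoly" where "Yb b = Yp - cpp b"

lemma shift2_Xa[simp]: "shift2 (Xa a) a b = Xp" by (simp add: Xa_def shift2_Xp)
lemma shift2_Yb[simp]: "shift2 (Yb b) a b = Yp" by (simp add: Yb_def shift2_Yp)

lemma poly_poly_eval: "poly (poly P q) x = poly (map_poly (\<lambda>c. poly c x) P) (poly q x)"
  by (induction P) (auto simp: map_poly_pCons)

lemma shift2_coeff00: "coeff (coeff (shift2 h a b) 0) 0 = eval2 h a b"
proof -
  have "coeff (coeff (shift2 h a b) 0) 0 = poly (poly (shift2 h a b) 0) 0"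
    by (simp add: poly_0_coeff_0)
  also have "\<dots> = eval2 h a b"
    unfolding shift2_def eval2_def poly_pcompose poly_poly_eval
    by (simp add: map_poly_map_poly o_def poly_pcompose map_poly_pCons)
  finally show ?thesis .
qed

definition lowv :: "nat \<Rightarrow> bipoly \<Rightarrow> bool" where
  "lowv k H \<longleftrightarrow> (\<forall>i j. i + j < k \<longrightarrow> coeff (coeff H j) i = 0)"

lemma lowv_mult:
  assumes G: "lowv k G" and H: "lowv l H"
  shows "lowv (k+l) (G*H)"
  unfolding lowv_def
proof (intro allI impI)
  fix i j assume ij: "i + j < k + l"
  have "coeff (coeff (G*H) j) i =
     (\<Sum>j1\<le>j. \<Sum>i1\<le>i. coeff (coeff G j1) i1 * coeff (coeff H (j-j1)) (i-i1))"
    by (simp add: coeff_mult coeff_sum)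
  also have "\<dots> = 0"
  proof (intro sum.neutral ballI)
    fix j1 i1 assume "j1 \<in> {..j}" "i1 \<in> {..i}"
    then have le: "j1 \<le> j" "i1 \<le> i" by auto
    show "coeff (coeff G j1) i1 * coeff (coeff H (j-j1)) (i-i1) = 0"
    proof (cases "i1 + j1 < k")
      case True then show ?thesis using G unfolding lowv_def by simp
    next
      case False
      then have "(i-i1) + (j-j1) < l" using ij le by linarith
      then show ?thesis using H unfolding lowv_def by simp
    qed
  qed
  finally show "coeff (coeff (G*H) j) i = 0" .
qed

lemma lowv_add: "lowv k G \<Longrightarrow> lowv k H \<Longrightarrow> lowv k (G+H)"
  by (simp add: lowv_def)
lemma lowv_diff: "lowv k G \<Longrightarrow> lowv k H \<Longrightarrow> lowv k (G-H)"
  by (simp add: lowv_def)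
lemma lowv_0_any[simp]: "lowv 0 H" by (simp add: lowv_def)
lemma lowv_zero[simp]: "lowv k 0" by (simp add: lowv_def)
lemma lowv_Xp: "lowv 1 Xp" by (simp add: lowv_def Xp_def)
lemma lowv_Yp: "lowv 1 Yp" by (simp add: lowv_def Yp_def)

lemma in_Mpow_lowv: "in_Mpow (a,b) k h \<longleftrightarrow> lowv k (shift2 h a b)"
  by (simp add: in_Mpow_def lowv_def)

lemma in_Mpow_ideal: "in_Mpow P k h \<Longrightarrow> in_Mpow P k (g*h)"
  using lowv_mult[of 0 _ k] by (cases P) (simp add: in_Mpow_lowv)
lemma in_Mpow_add: "in_Mpow P k h \<Longrightarrow> in_Mpow P k g \<Longrightarrow> in_Mpow P k (h+g)"
  by (cases P) (simp add: in_Mpow_lowv lowv_add)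
lemma in_Mpow_0: "in_Mpow P 0 h" by (simp add: in_Mpow_def)
lemma in_Mpow_zero: "in_Mpow P k 0" by (simp add: in_Mpow_def shift2_def)

fun Mk :: "bipoly \<Rightarrow> bipoly \<Rightarrow> nat \<Rightarrow> bipoly \<Rightarrow> bool" where
  "Mk U V 0 h = True"
| "Mk U V (Suc k) h = (\<exists>g1 g2. h = U*g1 + V*g2 \<and> Mk U V k g1 \<and> Mk U V k g2)"

declare Mk.simps(2)[simp del]

lemma Mk_SucI: "h = U*g1 + V*g2 \<Longrightarrow> Mk U V k g1 \<Longrightarrow> Mk U V k g2 \<Longrightarrow> Mk U V (Suc k) h"
  by (simp only: Mk.simps) blast

lemma Mk_zero[simp]: "Mk U V k 0"
proof (induction k)
  case (Suc k) show ?case by (rule Mk_SucI[of _ _ 0 _ 0]) (simp_all add: Suc)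
qed simp

lemma Mk_ideal: "Mk U V k h \<Longrightarrow> Mk U V k (g*h)"
proof (induction k arbitrary: h)
  case (Suc k)
  then obtain g1 g2 where "h = U*g1 + V*g2" "Mk U V k g1" "Mk U V k g2" by (simp only: Mk.simps) blast
  then show ?case
    by (intro Mk_SucI[of _ _ "g*g1" _ "g*g2"]) (simp_all add: Suc.IH algebra_simps)
qed simp

lemma Mk_add: "Mk U V k h \<Longrightarrow> Mk U V k g \<Longrightarrow> Mk U V k (h+g)"
proof (induction k arbitrary: h g)
  case (Suc k)
  obtain g1 g2 where a: "h = U*g1 + V*g2" "Mk U V k g1" "Mk U V k g2" using Suc.prems(1) by (simp only: Mk.simps) blast
  obtain g1' g2' where b: "g = U*g1' + V*g2'" "Mk U V k g1'" "Mk U V k g2'" using Suc.prems(2) by (simp only: Mk.simps) blast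
  show ?case
    by (intro Mk_SucI[of _ _ "g1+g1'" _ "g2+g2'"]) (simp_all add: a b Suc.IH algebra_simps)
qed simp

lemma Mk_neg: assumes "Mk U V k h" shows "Mk U V k (-h)"
proof -
  have "Mk U V k ((-1)*h)" by (rule Mk_ideal[OF assms])
  then show ?thesis by simp
qed

lemma Mk_diff: assumes "Mk U V k h" "Mk U V k g" shows "Mk U V k (h-g)"
proof -
  have "Mk U V k (h + (-g))" by (rule Mk_add[OF assms(1) Mk_neg[OF assms(2)]])
  then show ?thesis by simp
qed

lemma Mk_SucE: assumes "Mk U V (Suc k) h"
  obtains g1 g2 where "h = U*g1 + V*g2" "Mk U V k g1" "Mk U V k g2"
  using assms[unfolded Mk.simps(2)] by blast

lemma Mk_Suc_mono: "Mk U V (Suc k) h \<Longrightarrow> Mk U V k h"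
proof (induction k arbitrary: h)
  case 0 show ?case by simp
next
  case (Suc k)
  from Suc.prems obtain g1 g2 where h: "h = U*g1 + V*g2" "Mk U V (Suc k) g1" "Mk U V (Suc k) g2"
    by (rule Mk_SucE)
  show ?case by (rule Mk_SucI[OF h(1) Suc.IH[OF h(2)] Suc.IH[OF h(3)]])
qed

lemma Mk_mono: assumes "k \<le> k'" "Mk U V k' h" shows "Mk U V k h"
proof -
  have "Mk U V (k' - d) h" if "d \<le> k' - k" for d
    using that
  proof (induction d)
    case 0 then show ?case using assms by simp
  next
    case (Suc d)
    then have "Mk U V (Suc (k' - Suc d)) h" using assms(1) by (simp add: Suc_diff_Suc)
    then show ?case by (rule Mk_Suc_mono)
  qed
  from this[of "k' - k"] assms(1) show ?thesis by simp
qed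

lemma Mk_prod: "Mk U V k g \<Longrightarrow> Mk U V l h \<Longrightarrow> Mk U V (k+l) (g*h)"
proof (induction k arbitrary: g)
  case 0 then show ?case by (simp add: Mk_ideal)
next
  case (Suc k)
  from Suc.prems(1) obtain g1 g2 where g: "g = U*g1 + V*g2" "Mk U V k g1" "Mk U V k g2" by (rule Mk_SucE)
  have e: "g*h = U*(g1*h) + V*(g2*h)" by (simp add: g(1) algebra_simps)
  show ?case unfolding add_Suc
    by (rule Mk_SucI[OF e Suc.IH[OF g(2) Suc.prems(2)] Suc.IH[OF g(3) Suc.prems(2)]])
qed

lemma Mk_swap: "Mk U V k h = Mk V U k h"
proof (induction k arbitrary: h)
  case (Suc k)
  show ?case
  proof
    assume "Mk U V (Suc k) h"
    then obtain g1 g2 where g: "h = U*g1 + V*g2" "Mk U V k g1" "Mk U V k g2" by (rule Mk_SucE)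
    have e: "h = V*g2 + U*g1" using g(1) by (simp add: add.commute)
    show "Mk V U (Suc k) h" using g Suc.IH by (intro Mk_SucI[OF e]) auto
  next
    assume "Mk V U (Suc k) h"
    then obtain g1 g2 where g: "h = V*g1 + U*g2" "Mk V U k g1" "Mk V U k g2" by (rule Mk_SucE)
    have e: "h = U*g2 + V*g1" using g(1) by (simp add: add.commute)
    show "Mk U V (Suc k) h" using g Suc.IH by (intro Mk_SucI[OF e]) auto
  qed
qed simp

lemma Mk_U: "Mk U V 1 U"
  unfolding One_nat_def by (rule Mk_SucI[of _ _ 1 _ 0]) simp_all

lemma Mk_pow: "Mk U V k (U^k)"
proof (induction k)
  case (Suc k) then show ?case using Mk_prod[OF Mk_U Suc.IH] by simp
qed simp

lemma Mk_in_Mpow: "Mk (Xa a) (Yb b) k h \<Longrightarrow> in_Mpow (a,b) k h"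
proof (induction k arbitrary: h)
  case 0 then show ?case by (simp add: in_Mpow_0)
next
  case (Suc k)
  from Suc.prems obtain g1 g2 where h: "h = Xa a*g1 + Yb b*g2" "Mk (Xa a) (Yb b) k g1" "Mk (Xa a) (Yb b) k g2"
    by (rule Mk_SucE)
  then have "lowv k (shift2 g1 a b)" "lowv k (shift2 g2 a b)" using Suc.IH by (auto simp: in_Mpow_lowv)
  then have "lowv (1+k) (Xp * shift2 g1 a b)" "lowv (1+k) (Yp * shift2 g2 a b)"
    using lowv_mult lowv_Xp lowv_Yp by blast+
  then show ?case by (simp add: h(1) in_Mpow_lowv lowv_add)
qed

lemma division2: "\<exists>g1 g2. h = cpp (eval2 h a b) + Xa a * g1 + Yb b * g2"
proof -
  define q where "q = poly h [:b:]"
  have o: "[:-[:b:],1:] * synthetic_div h [:b:] + [:q:] = h"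
    using synthetic_div_correct'[of "[:b:]" h] by (simp add: q_def)
  have i: "[:-a,1:] * synthetic_div q a + [:poly q a:] = q"
    by (rule synthetic_div_correct')
  have pq: "poly q a = eval2 h a b"
    by (simp add: q_def eval2_def poly_poly_eval)
  have Y: "[:-[:b:],1:] = Yb b" by (simp add: Yb_def Yp_def cpp_def)
  have X: "[:[:-a,1:]:] = Xa a" by (simp add: Xa_def Xp_def cpp_def)
  have c: "[:x*y + z:] = [:x:]*[:y:] + [:z:]" for x y z :: "complex poly"
    by (simp add: pCons_one)
  have i': "[:q:] = Xa a * [:synthetic_div q a:] + cpp (eval2 h a b)"
    using arg_cong[OF i, of "\<lambda>t. [:t:]"] unfolding c X pq cpp_def by simp
  have "h = cpp (eval2 h a b) + Xa a * [:synthetic_div q a:] + Yb b * synthetic_div h [:b:]"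
    using o[unfolded Y, symmetric] i' by (simp add: ac_simps)
  then show ?thesis by blast
qed

lemma dX_mult: "dX (p*q) = dX p * q + p * dX q"
proof (rule poly_eqI)
  fix n
  have s: "pderiv (sum g A) = (\<Sum>x\<in>A. pderiv (g x))" for g :: "nat \<Rightarrow> complex poly" and A
    by (rule hom_sum_gen) (simp_all add: pderiv_add)
  have l: "coeff (dX (p*q)) n = (\<Sum>i\<le>n. coeff p i * pderiv (coeff q (n-i)) + coeff q (n-i) * pderiv (coeff p i))"
    by (simp add: dX_def coeff_map_poly coeff_mult s pderiv_mult)
  have r: "coeff (dX p * q + p * dX q) n = (\<Sum>i\<le>n. pderiv (coeff p i) * coeff q (n-i)) + (\<Sum>i\<le>n. coeff p i * pderiv (coeff q (n-i)))"
    by (simp only: coeff_add coeff_mult dX_def coeff_map_poly pderiv_0)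
  show "coeff (dX (p*q)) n = coeff (dX p * q + p * dX q) n"
    unfolding l r sum.distrib[symmetric] by (rule sum.cong) (simp_all add: ac_simps)
qed

lemma dX_add: "dX (p+q) = dX p + dX q"
  unfolding dX_def by (rule map_poly_hom_add) (simp_all add: pderiv_add)
lemma dX_diff: "dX (p-q) = dX p - dX q"
  unfolding dX_def by (rule map_poly_hom_diff) (simp_all add: pderiv_diff)
lemma dX_Xa: "dX (Xa a) = 1"
  by (simp add: dX_def Xa_def Xp_def cpp_def map_poly_pCons pderiv_pCons one_pCons)
lemma dX_Yb: "dX (Yb b) = 0"
  by (simp add: dX_def Yb_def Yp_def cpp_def map_poly_pCons pderiv_pCons)
lemma dY_Xa: "dY (Xa a) = 0"
  by (simp add: dY_def Xa_def Xp_def cpp_def pderiv_pCons)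
lemma dY_Yb: "dY (Yb b) = 1"
  by (simp add: dY_def Yb_def Yp_def cpp_def pderiv_pCons one_pCons)
lemma dY_mult: "dY (p*q) = dY p * q + p * dY q"
  by (simp add: dY_def pderiv_mult algebra_simps)
lemma dY_add: "dY (p+q) = dY p + dY q"
  by (simp add: dY_def pderiv_add)
lemma eval2_Xa[simp]: "eval2 (Xa a) a b = 0" by (simp add: Xa_def)
lemma eval2_Yb[simp]: "eval2 (Yb b) a b = 0" by (simp add: Yb_def)

lemma deriv_rep:
  assumes "f = Xa a * g1 + Yb b * g2"
  shows "eval2 (dX f) a b = eval2 g1 a b" "eval2 (dY f) a b = eval2 g2 a b"
  using assms by (simp_all add: dX_mult dX_add dX_Xa dX_Yb dY_mult dY_add dY_Xa dY_Yb)

lemma Q_step: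
  assumes div: "\<And>h. \<exists>c. Mk U V 1 (h - cpp c)"
    and fr: "cpp c2 * V = f - cpp c1 * U - R" and R: "Mk U V 2 R" and c2: "c2 \<noteq> 0"
  shows "Mk U V k h \<Longrightarrow> \<exists>c r b. h = cpp c * U^k + r + b*f \<and> Mk U V (Suc k) r"
proof (induction k arbitrary: h)
  case 0
  obtain c where "Mk U V 1 (h - cpp c)" using div by blast
  then show ?case by (intro exI[of _ c] exI[of _ "h - cpp c"] exI[of _ 0]) simp
next
  case (Suc k)
  from Suc.prems obtain g1 g2 where g: "h = U*g1 + V*g2" "Mk U V k g1" "Mk U V k g2" by (rule Mk_SucE)
  from Suc.IH[OF g(2)] obtain e1 r1 b1 where 1: "g1 = cpp e1 * U^k + r1 + b1*f" "Mk U V (Suc k) r1" by blast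
  from Suc.IH[OF g(3)] obtain e2 r2 b2 where 2: "g2 = cpp e2 * U^k + r2 + b2*f" "Mk U V (Suc k) r2" by blast
  define w where "w = cpp (e2/c2)"
  have we: "cpp e2 = w * cpp c2" using c2 by (simp add: w_def cpp_mult[symmetric])
  have hv: "cpp e2 * V = w * f - w * cpp c1 * U - w * R"
  proof -
    have "cpp e2 * V = w * (cpp c2 * V)" by (simp add: we mult.assoc)
    also have "\<dots> = w * (f - cpp c1 * U - R)" by (simp only: fr)
    finally show ?thesis by (simp add: algebra_simps)
  qed
  define r where "r = U*r1 + V*r2 - w*U^k*R"
  define b where "b = U*b1 + V*b2 + w*U^k"
  have eq: "h = (cpp e1 - w * cpp c1) * U^(Suc k) + r + b*f"
  proof -
    have "h = cpp e1 * U^Suc k + r + b * f + U^k * (cpp e2 * V - (w * f - w * cpp c1 * U - w * R)) - w * cpp c1 * U^Suc k"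
      by (simp add: g(1) 1(1) 2(1) r_def b_def algebra_simps)
    moreover have z: "cpp e2 * V - (w * f - w * cpp c1 * U - w * R) = 0" using hv by simp
    ultimately have "h = cpp e1 * U^Suc k + r + b * f - w * cpp c1 * U^Suc k" by simp
    then show ?thesis by (simp add: algebra_simps)
  qed
  have c: "cpp e1 - w * cpp c1 = cpp (e1 - (e2/c2) * c1)" unfolding w_def cpp_diff cpp_mult ..
  have rM: "Mk U V (Suc (Suc k)) r"
  proof -
    have a1: "Mk U V (Suc (Suc k)) (U*r1)" using Mk_prod[OF Mk_U 1(2)] by simp
    have a2: "Mk U V (Suc (Suc k)) (V*r2)" using Mk_prod[OF Mk_U 2(2)[unfolded Mk_swap[of U V]]]
      by (simp add: Mk_swap[of V U])
    have a3: "Mk U V (Suc (Suc k)) (U^k*R)" using Mk_prod[OF Mk_pow R] by simp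
    have a3': "Mk U V (Suc (Suc k)) (w*(U^k*R))" by (rule Mk_ideal[OF a3])
    show ?thesis unfolding r_def using Mk_diff[OF Mk_add[OF a1 a2] a3'] by (simp add: mult.assoc)
  qed
  show ?case using eq rM unfolding c by blast
qed

lemma span_gen:
  assumes div: "\<And>h. \<exists>c. Mk U V 1 (h - cpp c)"
    and fr: "cpp c2 * V = f - cpp c1 * U - R" and R: "Mk U V 2 R" and c2: "c2 \<noteq> 0"
  shows "\<exists>d b a. h - (\<Sum>l<m. cpp (d l) * U^l) = a + b*f \<and> Mk U V m a"
proof -
  have "\<forall>h. Mk U V (m - j) h \<longrightarrow> (\<exists>d b a. h - (\<Sum>l<m. cpp (d l) * U^l) = a + b*f \<and> Mk U V m a)"
    if "j \<le> m" for j
    using that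
  proof (induction j)
    case 0 show ?case
    proof (intro allI impI)
      fix h assume "Mk U V (m - 0) h"
      then show "\<exists>d b a. h - (\<Sum>l<m. cpp (d l) * U^l) = a + b*f \<and> Mk U V m a"
        by (intro exI[of _ "\<lambda>_. 0"] exI[of _ 0] exI[of _ h]) simp
    qed
  next
    case (Suc j)
    show ?case
    proof (intro allI impI)
      fix h assume hM: "Mk U V (m - Suc j) h"
      from Q_step[OF div fr R c2 hM] obtain c r b where
        e: "h = cpp c * U^(m - Suc j) + r + b*f" "Mk U V (Suc (m - Suc j)) r" by blast
      have "Suc (m - Suc j) = m - j" using Suc.prems by simp
      with e(2) have "Mk U V (m - j) r" by simp
      with Suc.IH Suc.prems obtain d b' a where
        r: "r - (\<Sum>l<m. cpp (d l) * U^l) = a + b'*f" "Mk U V m a" by auto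
      define d' where "d' = (\<lambda>l. d l + (if l = m - Suc j then c else 0))"
      have ks: "m - Suc j \<in> {..<m}" using Suc.prems by simp
      have "(\<Sum>l<m. cpp (d' l) * U^l) = (\<Sum>l<m. cpp (d l) * U^l) + (\<Sum>l<m. (if l = m - Suc j then cpp c * U^l else 0))"
        unfolding d'_def sum.distrib[symmetric] by (rule sum.cong) (auto simp: cpp_add algebra_simps)
      also have "\<dots> = (\<Sum>l<m. cpp (d l) * U^l) + cpp c * U^(m - Suc j)"
        using ks by (simp add: sum.delta)
      finally have sd: "(\<Sum>l<m. cpp (d' l) * U^l) = (\<Sum>l<m. cpp (d l) * U^l) + cpp c * U^(m - Suc j)" .
      have "h - (\<Sum>l<m. cpp (d' l) * U^l) = a + (b + b')*f"
        using r(1) by (simp add: sd e(1) algebra_simps)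
      then show "\<exists>d b a. h - (\<Sum>l<m. cpp (d l) * U^l) = a + b*f \<and> Mk U V m a"
        using r(2) by blast
    qed
  qed
  from this[of m] show ?thesis by simp
qed

lemma eval2_1[simp]: "eval2 1 a b = 1"
  using eval2_cpp[of 1 a b] by simp

lemma Mk1I: "h = U*g1 + V*g2 \<Longrightarrow> Mk U V 1 h"
  unfolding One_nat_def by (rule Mk_SucI) simp_all

lemma div_Mk: "\<exists>c. Mk (Xa a) (Yb b) 1 (h - cpp c)"
proof -
  obtain g1 g2 where "h = cpp (eval2 h a b) + Xa a * g1 + Yb b * g2" using division2 by blast
  then have "h - cpp (eval2 h a b) = Xa a * g1 + Yb b * g2" by (metis add_diff_cancel_left' add.assoc)
  then show ?thesis by (blast intro: Mk1I)
qed

lemma local_span: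
  assumes f0: "eval2 f a b = 0" and ns: "eval2 (dX f) a b \<noteq> 0 \<or> eval2 (dY f) a b \<noteq> 0"
  shows "\<exists>e. \<forall>h. \<exists>d. ord_ge f (a,b) m (h - (\<Sum>l<m. cpp (d l) * e l))"
proof -
  obtain g1 g2 where fg: "f = cpp (eval2 f a b) + Xa a * g1 + Yb b * g2" using division2 by blast
  with f0 have fg': "f = Xa a * g1 + Yb b * g2" by simp
  define c1 where "c1 = eval2 g1 a b"
  define c2 where "c2 = eval2 g2 a b"
  have dd: "eval2 (dX f) a b = c1" "eval2 (dY f) a b = c2"
    using deriv_rep[OF fg'] by (simp_all add: c1_def c2_def)
  obtain g11 g12 where g1: "g1 = cpp c1 + Xa a * g11 + Yb b * g12" using division2 c1_def by blast
  obtain g21 g22 where g2: "g2 = cpp c2 + Xa a * g21 + Yb b * g22" using division2 c2_def by blast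
  define R where "R = Xa a * (Xa a * g11 + Yb b * g12) + Yb b * (Xa a * g21 + Yb b * g22)"
  have RM: "Mk (Xa a) (Yb b) 2 R"
  proof -
    have "Mk (Xa a) (Yb b) (Suc 1) R" unfolding R_def
      by (rule Mk_SucI[OF refl]) (rule Mk1I[OF refl])+
    then show ?thesis by (simp add: numeral_2_eq_2)
  qed
  have fe: "f = cpp c1 * Xa a + cpp c2 * Yb b + R"
    unfolding fg' g1 g2 R_def by (simp add: algebra_simps)
  have conc: "ord_ge f (a,b) m h" if "h = A + B * f" "Mk (Xa a) (Yb b) m A" for h A B
    unfolding ord_ge_def
    by (rule exI[of _ 1], rule exI[of _ A], rule exI[of _ B]) (simp add: that(1) Mk_in_Mpow[OF that(2)])
  show ?thesis
  proof (cases "c2 \<noteq> 0")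
    case True
    have fr: "cpp c2 * Yb b = f - cpp c1 * Xa a - R" using fe by simp
    show ?thesis
    proof (intro exI[of _ "\<lambda>l. Xa a ^ l"] allI)
      fix h
      obtain d B A where "h - (\<Sum>l<m. cpp (d l) * Xa a ^ l) = A + B*f" "Mk (Xa a) (Yb b) m A"
        using span_gen[OF div_Mk fr RM True] by blast
      then show "\<exists>d. ord_ge f (a, b) m (h - (\<Sum>l<m. cpp (d l) * Xa a ^ l))"
        using conc by blast
    qed
  next
    case False
    with ns dd have c1: "c1 \<noteq> 0" by auto
    have fr: "cpp c1 * Xa a = f - cpp c2 * Yb b - R" using fe by simp
    have div': "\<exists>c. Mk (Yb b) (Xa a) 1 (h - cpp c)" for h
      using div_Mk[of a b h] by (simp add: Mk_swap[of "Yb b"])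
    have RM': "Mk (Yb b) (Xa a) 2 R" using RM by (simp add: Mk_swap[of "Yb b"])
    show ?thesis
    proof (intro exI[of _ "\<lambda>l. Yb b ^ l"] allI)
      fix h
      obtain d B A where h1: "h - (\<Sum>l<m. cpp (d l) * Yb b ^ l) = A + B*f" "Mk (Yb b) (Xa a) m A"
        using span_gen[OF div' fr RM' c1] by blast
      have "Mk (Xa a) (Yb b) m A" using h1(2) by (simp add: Mk_swap[of "Yb b"])
      then show "\<exists>d. ord_ge f (a, b) m (h - (\<Sum>l<m. cpp (d l) * Yb b ^ l))"
        using h1(1) conc by blast
    qed
  qed
qed

lemma ord_ge_add: assumes "ord_ge f P m x" "ord_ge f P m y" shows "ord_ge f P m (x + y)"
proof -
  obtain u1 a1 b1 where 1: "eval2 u1 (fst P) (snd P) \<noteq> 0" "u1 * x = a1 + b1 * f" "in_Mpow P m a1"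
    using assms(1) unfolding ord_ge_def by blast
  obtain u2 a2 b2 where 2: "eval2 u2 (fst P) (snd P) \<noteq> 0" "u2 * y = a2 + b2 * f" "in_Mpow P m a2"
    using assms(2) unfolding ord_ge_def by blast
  have e: "(u1*u2) * (x+y) = (u2*a1 + u1*a2) + (u2*b1 + u1*b2) * f"
  proof -
    have "(u1*u2) * (x+y) = u2*(u1*x) + u1*(u2*y)" by (simp add: algebra_simps)
    then show ?thesis by (simp add: 1(2) 2(2) algebra_simps)
  qed
  have "in_Mpow P m (u2*a1 + u1*a2)" using 1(3) 2(3) by (simp add: in_Mpow_add in_Mpow_ideal)
  then show ?thesis unfolding ord_ge_def using 1(1) 2(1) e
    by (intro exI[of _ "u1*u2"] exI[of _ "u2*a1 + u1*a2"] exI[of _ "u2*b1 + u1*b2"]) simp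
qed

lemma ord_ge_mult: assumes "ord_ge f P m x" shows "ord_ge f P m (g * x)"
proof -
  obtain u a b where 1: "eval2 u (fst P) (snd P) \<noteq> 0" "u * x = a + b * f" "in_Mpow P m a"
    using assms(1) unfolding ord_ge_def by blast
  have e: "u * (g*x) = g*a + (g*b)*f"
  proof -
    have "u * (g*x) = g*(u*x)" by (simp add: algebra_simps)
    then show ?thesis by (simp add: 1(2) algebra_simps)
  qed
  show ?thesis unfolding ord_ge_def using 1(1) e in_Mpow_ideal[OF 1(3)]
    by (intro exI[of _ u] exI[of _ "g*a"] exI[of _ "g*b"]) simp
qed

lemma ord_ge_zero: "ord_ge f P m 0"
  unfolding ord_ge_def by (rule exI[of _ 1], rule exI[of _ 0], rule exI[of _ 0]) (simp add: in_Mpow_zero)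

lemma ord_ge_0: "ord_ge f P 0 h"
  unfolding ord_ge_def by (rule exI[of _ 1], rule exI[of _ h], rule exI[of _ 0]) (simp add: in_Mpow_0)

lemma ord_ge_diff: assumes "ord_ge f P m x" "ord_ge f P m y" shows "ord_ge f P m (x - y)"
proof -
  have "ord_ge f P m (x + (-1) * y)" by (rule ord_ge_add[OF assms(1) ord_ge_mult[OF assms(2)]])
  then show ?thesis by simp
qed

definition Tsum :: "((complex\<times>complex) \<times> nat) list \<Rightarrow> (complex\<times>complex \<Rightarrow> nat \<Rightarrow> bipoly) \<Rightarrow> (nat \<Rightarrow> complex) \<Rightarrow> complex\<times>complex \<Rightarrow> bipoly" where
  "Tsum L E \<delta> P = (\<Sum>k<length L. if fst (L!k) = P then cpp (\<delta> k) * E P (snd (L!k)) else 0)"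

definition Rel where
  "Rel f D L E h \<delta> \<longleftrightarrow> (\<forall>P. ord_ge f P (count D P) (h - Tsum L E \<delta> P))"

lemma cpp_sum: "cpp (sum g A) = (\<Sum>x\<in>A. cpp (g x))"
  by (rule hom_sum_gen) (simp_all add: cpp_add)

lemma Tsum_lin: "Tsum L E (\<lambda>k. \<Sum>i\<in>I. c i * \<delta> i k) P = (\<Sum>i\<in>I. cpp (c i) * Tsum L E (\<delta> i) P)"
proof -
  have "Tsum L E (\<lambda>k. \<Sum>i\<in>I. c i * \<delta> i k) P =
    (\<Sum>k<length L. \<Sum>i\<in>I. cpp (c i) * (if fst (L!k) = P then cpp (\<delta> i k) * E P (snd (L!k)) else 0))"
    unfolding Tsum_def
    by (rule sum.cong) (auto simp: cpp_sum cpp_mult sum_distrib_right mult.assoc)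
  also have "\<dots> = (\<Sum>i\<in>I. cpp (c i) * Tsum L E (\<delta> i) P)"
    unfolding Tsum_def by (subst sum.swap) (simp add: sum_distrib_left)
  finally show ?thesis .
qed

lemma Tsum_diff: "Tsum L E (\<lambda>k. \<delta>1 k - \<delta>2 k) P = Tsum L E \<delta>1 P - Tsum L E \<delta>2 P"
  unfolding Tsum_def sum_subtractf[symmetric] by (rule sum.cong) (simp_all add: cpp_diff algebra_simps)

lemma Tsum_cong: "(\<And>k. k < length L \<Longrightarrow> \<delta> k = \<delta>' k) \<Longrightarrow> Tsum L E \<delta> P = Tsum L E \<delta>' P"
  unfolding Tsum_def by (rule sum.cong) simp_all

lemma Tsum_zero: "Tsum L E (\<lambda>_. 0) P = 0"
  unfolding Tsum_def by (simp add: cpp_0 cong: if_cong)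

lemma ord_ge_sum: "finite I \<Longrightarrow> (\<And>i. i \<in> I \<Longrightarrow> ord_ge f P m (x i)) \<Longrightarrow> ord_ge f P m (\<Sum>i\<in>I. y i * x i)"
proof (induction I rule: finite_induct)
  case empty then show ?case by (simp add: ord_ge_zero)
next
  case (insert i I) then show ?case by (simp add: ord_ge_add ord_ge_mult)
qed

lemma Rel_sum:
  assumes "finite I" "\<And>i. i \<in> I \<Longrightarrow> Rel f D L E (h i) (\<delta> i)"
  shows "Rel f D L E (\<Sum>i\<in>I. cpp (c i) * h i) (\<lambda>k. \<Sum>i\<in>I. c i * \<delta> i k)"
  unfolding Rel_def
proof
  fix P
  have "(\<Sum>i\<in>I. cpp (c i) * h i) - Tsum L E (\<lambda>k. \<Sum>i\<in>I. c i * \<delta> i k) P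
      = (\<Sum>i\<in>I. cpp (c i) * (h i - Tsum L E (\<delta> i) P))"
    unfolding Tsum_lin sum_subtractf[symmetric] by (simp add: right_diff_distrib)
  moreover have "ord_ge f P (count D P) (\<Sum>i\<in>I. cpp (c i) * (h i - Tsum L E (\<delta> i) P))"
  proof (rule ord_ge_sum[OF assms(1)])
    fix i assume "i \<in> I"
    from assms(2)[OF this] show "ord_ge f P (count D P) (h i - Tsum L E (\<delta> i) P)"
      unfolding Rel_def by blast
  qed
  ultimately show "ord_ge f P (count D P) ((\<Sum>i\<in>I. cpp (c i) * h i) - Tsum L E (\<lambda>k. \<Sum>i\<in>I. c i * \<delta> i k) P)"
    by simp
qed

lemma Rel_diff:
  assumes "Rel f D L E h1 \<delta>1" "Rel f D L E h2 \<delta>2"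
  shows "Rel f D L E (h1 - h2) (\<lambda>k. \<delta>1 k - \<delta>2 k)"
  unfolding Rel_def
proof
  fix P
  have "h1 - h2 - Tsum L E (\<lambda>k. \<delta>1 k - \<delta>2 k) P = (h1 - Tsum L E \<delta>1 P) - (h2 - Tsum L E \<delta>2 P)"
    by (simp add: Tsum_diff)
  then show "ord_ge f P (count D P) (h1 - h2 - Tsum L E (\<lambda>k. \<delta>1 k - \<delta>2 k) P)"
  proof -
    have a: "ord_ge f P (count D P) (h1 - Tsum L E \<delta>1 P)" using assms(1) unfolding Rel_def by blast
    have b: "ord_ge f P (count D P) (h2 - Tsum L E \<delta>2 P)" using assms(2) unfolding Rel_def by blast
    show ?thesis unfolding \<open>h1 - h2 - Tsum L E (\<lambda>k. \<delta>1 k - \<delta>2 k) P = _\<close> by (rule ord_ge_diff[OF a b])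
  qed
qed

lemma Rel_cong: "(\<And>k. k < length L \<Longrightarrow> \<delta> k = \<delta>' k) \<Longrightarrow> Rel f D L E h \<delta> = Rel f D L E h \<delta>'"
  unfolding Rel_def using Tsum_cong by metis

lemma Rel_zero: "Rel f D L E h (\<lambda>_. 0) \<longleftrightarrow> vanishes_on f D h"
  unfolding Rel_def vanishes_on_def by (simp add: Tsum_zero)

lemma sum_list_set:
  assumes "distinct L"
  shows "(\<Sum>k<length L. G (L!k)) = (\<Sum>x\<in>set L. G x)"
  using sum.reindex_bij_betw[OF bij_betw_nth[OF assms refl refl], of G] by simp

lemma Rel_exists:
  assumes dL: "distinct L" and sL: "set L = (SIGMA P:set_mset D. {..<count D P})"
    and sp: "\<And>P h. P \<in># D \<Longrightarrow> \<exists>d. ord_ge f P (count D P) (h - (\<Sum>l<count D P. cpp (d l) * E P l))"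
  shows "\<exists>\<delta>. Rel f D L E h \<delta>"
proof -
  from sp[of _ h] have "\<forall>P. \<exists>d. P \<in># D \<longrightarrow> ord_ge f P (count D P) (h - (\<Sum>l<count D P. cpp (d l) * E P l))"
    by blast
  then obtain d where d: "\<And>P. P \<in># D \<Longrightarrow> ord_ge f P (count D P) (h - (\<Sum>l<count D P. cpp (d P l) * E P l))"
    by metis
  define \<delta> where "\<delta> k = d (fst (L!k)) (snd (L!k))" for k
  have "ord_ge f P (count D P) (h - Tsum L E \<delta> P)" for P
  proof (cases "P \<in># D")
    case False
    then have c: "count D P = 0" by (simp add: count_eq_zero_iff)
    show ?thesis unfolding c by (rule ord_ge_0)
  next
    case True
    define G where "G x = (if fst x = P then cpp (d P (snd x)) * E P (snd x) else 0)" for x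
    have "Tsum L E \<delta> P = (\<Sum>k<length L. G (L!k))"
      unfolding Tsum_def G_def \<delta>_def by (rule sum.cong) auto
    also have "\<dots> = (\<Sum>x\<in>set L. G x)" by (rule sum_list_set[OF dL])
    also have "\<dots> = (\<Sum>x\<in>set L \<inter> {x. fst x = P}. cpp (d P (snd x)) * E P (snd x))"
      unfolding G_def by (simp add: sum.If_cases Int_def)
    also have "set L \<inter> {x. fst x = P} = Pair P ` {..<count D P}"
      using True unfolding sL by auto
    also have "(\<Sum>x\<in>Pair P ` {..<count D P}. cpp (d P (snd x)) * E P (snd x)) = (\<Sum>l<count D P. cpp (d P l) * E P l)"
      by (subst sum.reindex) (auto intro: inj_onI)
    finally show ?thesis using d[OF True] by simp
  qed
  then show ?thesis unfolding Rel_def by blast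
qed

lemma list_exists:
  fixes D :: "'a multiset"
  shows "\<exists>L. distinct L \<and> set L = (SIGMA P:set_mset D. {..<count D P}) \<and> length L = size D"
proof -
  have fin: "finite (SIGMA P:set_mset D. {..<count D P})" by auto
  obtain L where L: "set L = (SIGMA P:set_mset D. {..<count D P})" "distinct L"
    using finite_distinct_list[OF fin] by blast
  have "length L = card (SIGMA P:set_mset D. {..<count D P})"
    using L distinct_card by fastforce
  also have "\<dots> = (\<Sum>P\<in>set_mset D. count D P)" by (simp add: card_SigmaI)
  also have "\<dots> = size D" by (simp add: size_multiset_overloaded_eq)
  finally show ?thesis using L by blast
qed

lemma square_solve:
  fixes A :: "complex mat"
  assumes A: "A \<in> carrier_mat n n" and inj: "\<And>v. v \<in> carrier_vec n \<Longrightarrow> A *\<^sub>v v = 0\<^sub>v n \<Longrightarrow> v = 0\<^sub>v n"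
    and d: "\<delta> \<in> carrier_vec n"
  shows "\<exists>c \<in> carrier_vec n. A *\<^sub>v c = \<delta>"
proof -
  have "det A \<noteq> 0" using det_0_iff_vec_prod_zero_field[OF A] inj by blast
  from det_non_zero_imp_unit[OF A this, of "()"]
  obtain B where B: "B \<in> carrier_mat n n" "A * B = 1\<^sub>m n"
    unfolding Units_def ring_mat_def by auto
  have "A *\<^sub>v (B *\<^sub>v \<delta>) = (A * B) *\<^sub>v \<delta>" by (rule assoc_mult_mat_vec[symmetric, OF A B(1) d])
  also have "\<dots> = \<delta>" using B d by simp
  finally show ?thesis using B d by (intro bexI[of _ "B *\<^sub>v \<delta>"]) auto
qed

lemma mat_vec_sum:
  fixes \<Delta> :: "nat \<Rightarrow> nat \<Rightarrow> complex"
  assumes "v \<in> carrier_vec g" "k < g"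
  shows "(mat g g (\<lambda>(k,j). \<Delta> (Suc j) k) *\<^sub>v v) $ k = (\<Sum>i\<in>{1..g}. (v $ (i - 1)) * \<Delta> i k)"
proof -
  have "(mat g g (\<lambda>(k,j). \<Delta> (Suc j) k) *\<^sub>v v) $ k = (\<Sum>j<g. \<Delta> (Suc j) k * (v $ j))"
    using assms by (simp add: scalar_prod_def atLeast0LessThan)
  also have "\<dots> = (\<Sum>j<g. (v $ (Suc j - 1)) * \<Delta> (Suc j) k)"
    by (intro sum.cong refl) (simp add: mult.commute)
  also have "\<dots> = (\<Sum>i\<in>{1..g}. (v $ (i - 1)) * \<Delta> i k)"
    using sum.atLeast1_atMost_eq[of "\<lambda>i. (v $ (i - 1)) * \<Delta> i k" g] by simp
  finally show ?thesis .
qed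

theorem mainTheorem3:
  fixes n s :: nat and lam :: "int \<Rightarrow> complex" and D :: "(complex \<times> complex) multiset"
  assumes "n \<ge> 2" and "s \<ge> 2" and "coprime n s"
    and "\<forall>k \<le> 0. lam k = 0"
    and "nonsingular_affine (ns_curve n s lam)"
    and "\<forall>P \<in># D. on_curve (ns_curve n s lam) P"
    and "size D = genus n s"
    and "reduced (ns_curve n s lam) D"
    and "nonspecial n s lam D"
  shows "\<forall>h :: bipoly.
           (\<exists>c. vanishes_on (ns_curve n s lam) D (h - ups_comb n s c)) \<and>
           (\<forall>c c'. vanishes_on (ns_curve n s lam) D (h - ups_comb n s c) \<and>
                   vanishes_on (ns_curve n s lam) D (h - ups_comb n s c') \<longrightarrow>
                   (\<forall>i\<in>{1..genus n s}. c i = c' i))"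
proof -
  define f where "f = ns_curve n s lam"
  define g where "g = genus n s"
  have ns: "\<forall>c. vanishes_on f D (ups_comb n s c) \<longrightarrow> (\<forall>i\<in>{1..g}. c i = 0)"
    using assms(9) unfolding nonspecial_def f_def g_def .
  have "\<exists>L. distinct L \<and> set L = (SIGMA P:set_mset D. {..<count D P}) \<and> length L = size D"
    by (rule list_exists)
  then obtain L where L: "distinct L \<and> set L = (SIGMA P:set_mset D. {..<count D P}) \<and> length L = size D" ..
  have dL: "distinct L" by (rule conjunct1[OF L])
  have sL: "set L = (SIGMA P:set_mset D. {..<count D P})" by (rule conjunct1[OF conjunct2[OF L]])
  have lL0: "length L = size D" by (rule conjunct2[OF conjunct2[OF L]])
  have lL: "length L = g" using lL0 assms(7) unfolding g_def by simp
  have "\<forall>P. \<exists>e. P \<in># D \<longrightarrow> (\<forall>h. \<exists>d. ord_ge f P (count D P) (h - (\<Sum>l<count D P. cpp (d l) * e l)))"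
  proof (intro allI)
    fix P
    show "\<exists>e. P \<in># D \<longrightarrow> (\<forall>h. \<exists>d. ord_ge f P (count D P) (h - (\<Sum>l<count D P. cpp (d l) * e l)))"
    proof (cases "P \<in># D")
      case False then show ?thesis by (intro exI[of _ "\<lambda>_. 0"]) simp
    next
      case True
      have "\<exists>e. \<forall>h. \<exists>d. ord_ge f P (count D P) (h - (\<Sum>l<count D P. cpp (d l) * e l))"
  proof -
    have "\<forall>P\<in>#D. on_curve f P" using assms(6) unfolding f_def .
    then have "eval2 f (fst P) (snd P) = 0" using True unfolding on_curve_def by (rule bspec)
    moreover have "\<forall>a b. eval2 f a b = 0 \<longrightarrow> eval2 (dX f) a b \<noteq> 0 \<or> eval2 (dY f) a b \<noteq> 0"
      using assms(5) unfolding f_def nonsingular_affine_def .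
    ultimately have "eval2 f (fst P) (snd P) = 0"
       "eval2 (dX f) (fst P) (snd P) \<noteq> 0 \<or> eval2 (dY f) (fst P) (snd P) \<noteq> 0" by simp_all
    then have "\<exists>e. \<forall>h. \<exists>d. ord_ge f (fst P, snd P) (count D P) (h - (\<Sum>l<count D P. cpp (d l) * e l))"
      by (rule local_span)
    then show ?thesis by (simp only: prod.collapse)
  qed
      then obtain e where "\<forall>h. \<exists>d. ord_ge f P (count D P) (h - (\<Sum>l<count D P. cpp (d l) * e l))" ..
      then show ?thesis by (intro exI[of _ e] impI)
    qed
  qed
  from choice[OF this] obtain E where
    E: "\<forall>P. P \<in># D \<longrightarrow> (\<forall>h. \<exists>d. ord_ge f P (count D P) (h - (\<Sum>l<count D P. cpp (d l) * E P l)))"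
    ..
  have sp: "\<exists>d. ord_ge f P (count D P) (h - (\<Sum>l<count D P. cpp (d l) * E P l))" if "P \<in># D" for P h
    using mp[OF spec[OF E, of P] that] by (rule spec)
  have Rex: "\<exists>\<delta>. Rel f D L E h \<delta>" for h by (rule Rel_exists[OF dL sL sp])
  have "\<forall>i. \<exists>\<delta>. Rel f D L E (upsilon n s i) \<delta>" using Rex by blast
  from choice[OF this] obtain \<Delta> where \<Delta>: "\<And>i. Rel f D L E (upsilon n s i) (\<Delta> i)" by blast
  define A where "A = mat g g (\<lambda>(k,j). \<Delta> (Suc j) k)"
  have Acar: "A \<in> carrier_mat g g" unfolding A_def by simp
  have Rups: "Rel f D L E (ups_comb n s c) (\<lambda>k. \<Sum>i\<in>{1..g}. c i * \<Delta> i k)" for c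
    unfolding ups_comb_def g_def[symmetric] by (rule Rel_sum) (simp_all add: \<Delta>)
  have inj: "v = 0\<^sub>v g" if v: "v \<in> carrier_vec g" "A *\<^sub>v v = 0\<^sub>v g" for v
  proof -
    define c where "c i = (v $ (i - 1))" for i
    have "Rel f D L E (ups_comb n s c) (\<lambda>_. 0)"
    proof (subst Rel_cong[of L _ "\<lambda>k. \<Sum>i\<in>{1..g}. c i * \<Delta> i k"])
      fix k assume "k < length L"
      then have k: "k < g" using lL by simp
      have "0 = (A *\<^sub>v v) $ k" using v k by simp
      also have "\<dots> = (\<Sum>i\<in>{1..g}. c i * \<Delta> i k)" unfolding A_def c_def by (rule mat_vec_sum[OF v(1) k])
      finally show "0 = (\<Sum>i\<in>{1..g}. c i * \<Delta> i k)" .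
    qed (rule Rups)
    then have "vanishes_on f D (ups_comb n s c)" by (simp add: Rel_zero)
    with ns have c0: "\<forall>i\<in>{1..g}. c i = 0" by blast
    show ?thesis
    proof (rule eq_vecI)
      fix j assume "j < dim_vec (0\<^sub>v g :: complex vec)"
      then have "j < g" by simp
      then have "c (Suc j) = 0" using c0 by simp
      then show "v $ j = 0\<^sub>v g $ j" using \<open>j < g\<close> unfolding c_def by simp
    qed (use v in simp)
  qed
  show ?thesis
  proof (rule allI, rule conjI)
    fix h
    obtain \<delta> where \<delta>: "Rel f D L E h \<delta>" using Rex by blast
    obtain cv where cv: "cv \<in> carrier_vec g" "A *\<^sub>v cv = vec g \<delta>"
      using square_solve[OF Acar inj, of "vec g \<delta>"] by auto
    define c where "c i = (cv $ (i - 1))" for i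
    have "Rel f D L E (h - ups_comb n s c) (\<lambda>k. \<delta> k - (\<Sum>i\<in>{1..g}. c i * \<Delta> i k))"
      by (rule Rel_diff[OF \<delta> Rups])
    moreover have "Rel f D L E (h - ups_comb n s c) (\<lambda>k. \<delta> k - (\<Sum>i\<in>{1..g}. c i * \<Delta> i k))
        = Rel f D L E (h - ups_comb n s c) (\<lambda>_. 0)"
    proof (rule Rel_cong)
      fix k assume "k < length L"
      then have k: "k < g" using lL by simp
      have "(\<Sum>i\<in>{1..g}. c i * \<Delta> i k) = (A *\<^sub>v cv) $ k"
        unfolding A_def c_def by (rule mat_vec_sum[OF cv(1) k, symmetric])
      also have "\<dots> = \<delta> k" using cv(2) k by simp
      finally show "\<delta> k - (\<Sum>i\<in>{1..g}. c i * \<Delta> i k) = 0" by simp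
    qed
    ultimately have "vanishes_on f D (h - ups_comb n s c)" by (simp add: Rel_zero)
    then show "\<exists>c. vanishes_on (ns_curve n s lam) D (h - ups_comb n s c)" unfolding f_def by blast
  next
    fix h
    show "\<forall>c c'. vanishes_on (ns_curve n s lam) D (h - ups_comb n s c) \<and>
                   vanishes_on (ns_curve n s lam) D (h - ups_comb n s c') \<longrightarrow>
                   (\<forall>i\<in>{1..genus n s}. c i = c' i)"
    proof (intro allI impI)
      fix c c'
      assume a: "vanishes_on (ns_curve n s lam) D (h - ups_comb n s c) \<and>
                 vanishes_on (ns_curve n s lam) D (h - ups_comb n s c')"
      have e: "ups_comb n s (\<lambda>i. c' i - c i) = (h - ups_comb n s c) - (h - ups_comb n s c')"
        unfolding ups_comb_def by (simp add: cpp_diff left_diff_distrib sum_subtractf)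
      have "vanishes_on f D (ups_comb n s (\<lambda>i. c' i - c i))"
        using a unfolding vanishes_on_def e f_def by (blast intro: ord_ge_diff)
      with ns have "\<forall>i\<in>{1..g}. c' i - c i = 0" by blast
      then show "\<forall>i\<in>{1..genus n s}. c i = c' i" unfolding g_def by simp
    qed
  qed
qed

end
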